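(* Let $H$ be a capacitated hypergraph with an MA-ordering $v_1,\ldots,v_n$, and let $\alpha\ge0$. If $v_i$ and $v_j$ ($i\ne j$) are in an $\alpha$-tight set, then $\lambda(v_i,v_j)\ge\alpha$.
   Context: A hypergraph $H=(V,E)$ has finite vertex set $V$, a finite multiset $E$ of edges (subsets of $V$) and capacities $c:E\to\mathbb{R}_{\ge0}$. $c(S)$ is the total capacity of edges meeting both $S$ and $V\setminus S$; for distinct $s,t$, $\lambda(s,t)=\min\{c(S):|S\cap\{s,t\}|=1\}$. For subsets $A_1,\ldots,A_k$, $d(A_1,\ldots,A_k)$ is the total capacity of edges meeting every $A_i$ (a vertex $v$ stands for $\{v\}$). $V_i=\{v_1,\ldots,v_i\}$; the ordering is an MA-ordering if $d(V_{i-1},v_i)\ge d(V_{i-1},v_j)$ for all $1\le i<j\le n$. A set of consecutive vertices $v_a,\ldots,v_b$ ($a\le b$) is $\alpha$-tight if $d(V_k,v_{k+1})\ge\alpha$ for all $a\le k<b$. *)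

theory Defs
  imports Complex_Main
begin

text \<open>A capacitated hypergraph: finite vertex set V, a finite index set Es of edges
  (so parallel edges, i.e. a multiset of edges, are allowed), an edge map
  edge :: 'e \<Rightarrow> 'a set and capacities cap :: 'e \<Rightarrow> real.\<close>

definition hypergraph :: "'a set \<Rightarrow> 'e set \<Rightarrow> ('e \<Rightarrow> 'a set) \<Rightarrow> ('e \<Rightarrow> real) \<Rightarrow> bool" where
  "hypergraph V Es edge cap \<longleftrightarrow> finite V \<and> finite Es \<and>
     (\<forall>e\<in>Es. edge e \<subseteq> V) \<and> (\<forall>e\<in>Es. cap e \<ge> 0)"

definition cut_cap :: "'a set \<Rightarrow> 'e set \<Rightarrow> ('e \<Rightarrow> 'a set) \<Rightarrow> ('e \<Rightarrow> real) \<Rightarrow> 'a set \<Rightarrow> real" where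
  "cut_cap V Es edge cap S =
     sum cap {e\<in>Es. edge e \<inter> S \<noteq> {} \<and> edge e \<inter> (V - S) \<noteq> {}}"

definition lam :: "'a set \<Rightarrow> 'e set \<Rightarrow> ('e \<Rightarrow> 'a set) \<Rightarrow> ('e \<Rightarrow> real) \<Rightarrow> 'a \<Rightarrow> 'a \<Rightarrow> real" where
  "lam V Es edge cap s t =
     Min {cut_cap V Es edge cap S | S. S \<subseteq> V \<and> card (S \<inter> {s, t}) = 1}"

definition dcap :: "'e set \<Rightarrow> ('e \<Rightarrow> 'a set) \<Rightarrow> ('e \<Rightarrow> real) \<Rightarrow> 'a set list \<Rightarrow> real" where
  "dcap Es edge cap As = sum cap {e\<in>Es. \<forall>A\<in>set As. edge e \<inter> A \<noteq> {}}"

definition prefix_set :: "(nat \<Rightarrow> 'a) \<Rightarrow> nat \<Rightarrow> 'a set" where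
  "prefix_set v i = v ` {1..i}"

definition MA_ordering :: "'a set \<Rightarrow> 'e set \<Rightarrow> ('e \<Rightarrow> 'a set) \<Rightarrow> ('e \<Rightarrow> real) \<Rightarrow> (nat \<Rightarrow> 'a) \<Rightarrow> bool" where
  "MA_ordering V Es edge cap v \<longleftrightarrow> bij_betw v {1..card V} V \<and>
     (\<forall>i j. 1 \<le> i \<and> i < j \<and> j \<le> card V \<longrightarrow>
        dcap Es edge cap [prefix_set v (i - 1), {v i}] \<ge> dcap Es edge cap [prefix_set v (i - 1), {v j}])"

text \<open>The consecutive vertices v_a,...,v_b (1 \<le> a \<le> b \<le> n) form an alpha-tight set.\<close>
definition tight :: "'a set \<Rightarrow> 'e set \<Rightarrow> ('e \<Rightarrow> 'a set) \<Rightarrow> ('e \<Rightarrow> real) \<Rightarrow> (nat \<Rightarrow> 'a) \<Rightarrow> real \<Rightarrow> nat \<Rightarrow> nat \<Rightarrow> bool" where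
  "tight V Es edge cap v \<alpha> a b \<longleftrightarrow> 1 \<le> a \<and> a \<le> b \<and> b \<le> card V \<and>
     (\<forall>k. a \<le> k \<and> k < b \<longrightarrow> dcap Es edge cap [prefix_set v k, {v (Suc k)}] \<ge> \<alpha>)"

end

theory Submission
  imports Defs
begin

definition ccap :: "'e set \<Rightarrow> ('e \<Rightarrow> 'a set) \<Rightarrow> ('e \<Rightarrow> real) \<Rightarrow> (nat \<Rightarrow> 'a) \<Rightarrow> 'a set \<Rightarrow> nat \<Rightarrow> real" where
  "ccap Es edge cap v S m = sum cap {e\<in>Es. edge e \<inter> (prefix_set v m \<inter> S) \<noteq> {} \<and> edge e \<inter> (prefix_set v m - S) \<noteq> {}}"

lemma dcap2: "dcap Es edge cap [A, B] = sum cap {e\<in>Es. edge e \<inter> A \<noteq> {} \<and> edge e \<inter> B \<noteq> {}}"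
  by (simp add: dcap_def)

lemma prefix_mem: "x \<in> prefix_set v m \<longleftrightarrow> (\<exists>k. 1 \<le> k \<and> k \<le> m \<and> x = v k)"
  by (auto simp: prefix_set_def)

lemma prefix_mono: "j \<le> m \<Longrightarrow> prefix_set v j \<subseteq> prefix_set v m"
  by (auto simp: prefix_set_def)

lemma active_bound:
  assumes hg: "hypergraph V Es edge cap" and ma: "MA_ordering V Es edge cap v"
  shows "2 \<le> m \<Longrightarrow> m \<le> card V \<Longrightarrow> (v (m-1) \<in> S) \<noteq> (v m \<in> S) \<Longrightarrow>
     dcap Es edge cap [prefix_set v (m-1), {v m}] \<le> ccap Es edge cap v S m"
proof (induction m rule: less_induct)
  case (less m)
  have finE: "finite Es" and capnn: "\<And>e. e \<in> Es \<Longrightarrow> cap e \<ge> 0"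
    using hg by (auto simp: hypergraph_def)
  define J where "J = {j. 1 \<le> j \<and> j \<le> m-1 \<and> (\<forall>k. j \<le> k \<and> k \<le> m-1 \<longrightarrow> (v k \<in> S) \<noteq> (v m \<in> S))}"
  have "m-1 \<in> J" using less.prems by (auto simp: J_def)
  have finJ: "finite J" by (rule finite_subset[of _ "{..m}"]) (auto simp: J_def)
  define j where "j = Min J"
  have jJ: "j \<in> J" using finJ \<open>m-1 \<in> J\<close> unfolding j_def by (intro Min_in) auto
  have jmin: "\<And>j'. j' \<in> J \<Longrightarrow> j \<le> j'" using finJ unfolding j_def by simp
  have j1: "1 \<le> j" and jm: "j \<le> m - 1" using jJ by (auto simp: J_def)
  have run: "\<And>k. j \<le> k \<Longrightarrow> k \<le> m-1 \<Longrightarrow> (v k \<in> S) \<noteq> (v m \<in> S)" using jJ by (auto simp: J_def)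
  have B: "dcap Es edge cap [prefix_set v (j-1), {v m}] \<le> ccap Es edge cap v S j"
  proof (cases "j = 1")
    case True
    have "dcap Es edge cap [prefix_set v (j-1), {v m}] = 0"
      using True by (simp add: dcap2 prefix_set_def)
    moreover have "ccap Es edge cap v S j \<ge> 0"
      unfolding ccap_def by (rule sum_nonneg) (auto intro: capnn)
    ultimately show ?thesis by simp
  next
    case False
    hence j2: "2 \<le> j" using j1 by simp
    have s1: "(v (j-1) \<in> S) = (v m \<in> S)"
    proof (rule ccontr)
      assume "(v (j-1) \<in> S) \<noteq> (v m \<in> S)"
      hence "j - 1 \<in> J" unfolding J_def
      proof (intro CollectI conjI allI impI)
        fix k assume "j - 1 \<le> k \<and> k \<le> m - 1"
        thus "(v k \<in> S) \<noteq> (v m \<in> S)"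
        proof -
          have "k = j - 1 \<or> j \<le> k" using \<open>j - 1 \<le> k \<and> k \<le> m - 1\<close> by arith
          thus ?thesis using run[of k] \<open>(v (j-1) \<in> S) \<noteq> (v m \<in> S)\<close> \<open>j - 1 \<le> k \<and> k \<le> m - 1\<close> by blast
        qed
      qed (use j2 jm in auto)
      thus False using jmin j2 by fastforce
    qed
    have s2: "(v j \<in> S) \<noteq> (v m \<in> S)" using run[of j] jm by simp
    have IH: "dcap Es edge cap [prefix_set v (j-1), {v j}] \<le> ccap Es edge cap v S j"
      using less.IH[of j] j2 jm less.prems s1 s2 by simp
    have "dcap Es edge cap [prefix_set v (j-1), {v m}] \<le> dcap Es edge cap [prefix_set v (j-1), {v j}]"
      using ma j1 jm less.prems unfolding MA_ordering_def by auto
    thus ?thesis using IH by simp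
  qed
  define D where "D = {e\<in>Es. edge e \<inter> prefix_set v (m-1) \<noteq> {} \<and> edge e \<inter> {v m} \<noteq> {}}"
  define D' where "D' = {e\<in>Es. edge e \<inter> prefix_set v (j-1) \<noteq> {} \<and> edge e \<inter> {v m} \<noteq> {}}"
  define X where "X = {e\<in>Es. v m \<in> edge e \<and> edge e \<inter> prefix_set v (m-1) \<noteq> {} \<and> edge e \<inter> prefix_set v (j-1) = {}}"
  define Cj where "Cj = {e\<in>Es. edge e \<inter> (prefix_set v j \<inter> S) \<noteq> {} \<and> edge e \<inter> (prefix_set v j - S) \<noteq> {}}"
  define Cm where "Cm = {e\<in>Es. edge e \<inter> (prefix_set v m \<inter> S) \<noteq> {} \<and> edge e \<inter> (prefix_set v m - S) \<noteq> {}}"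
  have fin: "finite D" "finite D'" "finite X" "finite Cj" "finite Cm"
    using finE by (auto simp: D_def D'_def X_def Cj_def Cm_def)
  have nn: "\<And>e. e \<in> Es \<Longrightarrow> cap e \<ge> 0" by (rule capnn)
  have sub1: "D \<subseteq> D' \<union> X" by (auto simp: D_def D'_def X_def)
  have XC: "X \<subseteq> Cm"
  proof
    fix e assume e: "e \<in> X"
    then obtain x where x: "x \<in> edge e" "x \<in> prefix_set v (m-1)" "x \<notin> prefix_set v (j-1)"
      by (auto simp: X_def)
    then obtain k where k: "1 \<le> k" "k \<le> m-1" "x = v k" by (auto simp: prefix_mem)
    have "j \<le> k"
    proof (rule ccontr)
      assume "\<not> j \<le> k"
      hence "k \<le> j - 1" by arith
      hence "x \<in> prefix_set v (j-1)" using k by (auto simp: prefix_mem)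
      thus False using x(3) by simp
    qed
    hence sk: "(v k \<in> S) \<noteq> (v m \<in> S)" using run k by simp
    have "v k \<in> prefix_set v m" using k less.prems unfolding prefix_mem by (intro exI[of _ k]) auto
    moreover have "v m \<in> prefix_set v m" using less.prems unfolding prefix_mem by (intro exI[of _ m]) auto
    moreover have "v m \<in> edge e" "e \<in> Es" using e by (auto simp: X_def)
    ultimately show "e \<in> Cm" using sk x k unfolding Cm_def by blast
  qed
  have pjm: "prefix_set v j \<subseteq> prefix_set v m" using prefix_mono[of j m v] jm by simp
  have CC: "Cj \<subseteq> Cm" using pjm unfolding Cj_def Cm_def by blast
  have disj: "Cj \<inter> X = {}"
  proof (rule ccontr)
    assume "Cj \<inter> X \<noteq> {}"
    then obtain e where e: "e \<in> Cj" "e \<in> X" by blast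
    then obtain x y where xy: "x \<in> edge e" "x \<in> prefix_set v j" "x \<in> S" "y \<in> edge e" "y \<in> prefix_set v j" "y \<notin> S"
      by (auto simp: Cj_def)
    have "x \<notin> prefix_set v (j-1)" "y \<notin> prefix_set v (j-1)" using e(2) xy by (auto simp: X_def)
    moreover have "\<And>z. z \<in> prefix_set v j \<Longrightarrow> z \<notin> prefix_set v (j-1) \<Longrightarrow> z = v j"
    proof -
      fix z assume z: "z \<in> prefix_set v j" "z \<notin> prefix_set v (j-1)"
      then obtain k where "1 \<le> k" "k \<le> j" "z = v k" by (auto simp: prefix_mem)
      moreover have "\<not> k \<le> j - 1" using z(2) calculation by (auto simp: prefix_mem)
      ultimately have "k = j" by arith
      thus "z = v j" using \<open>z = v k\<close> by simp
    qed
    ultimately have "x = v j" "y = v j" using xy(2,5) by blast+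
    thus False using xy by simp
  qed
  have c0: "sum cap D \<le> sum cap (D' \<union> X)"
    using fin sub1 nn by (intro sum_mono2) (auto simp: D'_def X_def)
  have c1: "sum cap (D' \<union> X) \<le> sum cap D' + sum cap X"
  proof -
    have "sum cap (D' \<inter> X) \<ge> 0" using nn by (intro sum_nonneg) (auto simp: X_def)
    thus ?thesis using sum_Un[OF fin(2) fin(3), of cap] by simp
  qed
  have c2: "sum cap D' \<le> sum cap Cj" using B unfolding dcap2 D'_def ccap_def Cj_def .
  have c3: "sum cap Cj + sum cap X = sum cap (Cj \<union> X)" using fin disj by (simp add: sum.union_disjoint)
  have c4: "sum cap (Cj \<union> X) \<le> sum cap Cm" using fin XC CC nn by (intro sum_mono2) (auto simp: Cm_def)
  have e1: "dcap Es edge cap [prefix_set v (m-1), {v m}] = sum cap D" unfolding dcap2 D_def ..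
  have e2: "ccap Es edge cap v S m = sum cap Cm" unfolding ccap_def Cm_def ..
  show ?case unfolding e1 e2 using c0 c1 c2 c3 c4 by linarith
qed

lemma ccap_le_cut:
  assumes hg: "hypergraph V Es edge cap" and "S \<subseteq> V" and ma: "MA_ordering V Es edge cap v" and "m \<le> card V"
  shows "ccap Es edge cap v S m \<le> cut_cap V Es edge cap S"
proof -
  have pv: "prefix_set v m \<subseteq> V" using ma assms(4) unfolding MA_ordering_def prefix_set_def bij_betw_def by auto
  have finE: "finite Es" and capnn: "\<And>e. e \<in> Es \<Longrightarrow> cap e \<ge> 0"
    using hg by (auto simp: hypergraph_def)
  show ?thesis unfolding ccap_def cut_cap_def
    using finE capnn pv by (intro sum_mono2) auto
qed

lemma side_change:
  "p \<le> q \<Longrightarrow> P p \<noteq> P q \<Longrightarrow> \<exists>k. p \<le> k \<and> k < q \<and> P k \<noteq> P (Suc k)"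
proof (induction q)
  case 0 thus ?case by simp
next
  case (Suc q)
  show ?case
  proof (cases "p = Suc q")
    case True thus ?thesis using Suc by simp
  next
    case False
    hence "p \<le> q" using Suc by simp
    show ?thesis
    proof (cases "P p = P q")
      case True thus ?thesis using Suc \<open>p \<le> q\<close> by (intro exI[of _ q]) auto
    next
      case False thus ?thesis using Suc.IH \<open>p \<le> q\<close> less_Suc_eq by blast
    qed
  qed
qed

theorem mainTheorem19:
  fixes V :: "'a set" and Es :: "'e set" and edge :: "'e \<Rightarrow> 'a set" and cap :: "'e \<Rightarrow> real"
    and v :: "nat \<Rightarrow> 'a" and \<alpha> :: real and a b i j :: nat
  assumes "hypergraph V Es edge cap"
    and "MA_ordering V Es edge cap v"
    and "\<alpha> \<ge> 0"
    and "tight V Es edge cap v \<alpha> a b"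
    and "a \<le> i" and "i \<le> b" and "a \<le> j" and "j \<le> b" and "i \<noteq> j"
  shows "lam V Es edge cap (v i) (v j) \<ge> \<alpha>"
proof -
  have finV: "finite V" using assms(1) by (simp add: hypergraph_def)
  have bij: "bij_betw v {1..card V} V" using assms(2) by (simp add: MA_ordering_def)
  have rng: "1 \<le> a" "b \<le> card V" using assms(4) by (auto simp: tight_def)
  have ij: "i \<in> {1..card V}" "j \<in> {1..card V}" using rng assms(5-8) by auto
  have vi: "v i \<in> V" "v j \<in> V" using bij ij by (meson bij_betwE)+
  have vij: "v i \<noteq> v j" using bij ij assms(9) by (metis bij_betw_def inj_onD)
  define M where "M = {cut_cap V Es edge cap S | S. S \<subseteq> V \<and> card (S \<inter> {v i, v j}) = 1}"
  have finM: "finite M"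
  proof -
    have "M \<subseteq> cut_cap V Es edge cap ` Pow V" by (auto simp: M_def)
    moreover have "finite (cut_cap V Es edge cap ` Pow V)" using finV by simp
    ultimately show ?thesis by (rule finite_subset)
  qed
  have neM: "M \<noteq> {}"
  proof -
    have "{v i} \<inter> {v i, v j} = {v i}" by auto
    hence "cut_cap V Es edge cap {v i} \<in> M" using vi unfolding M_def by force
    thus ?thesis by blast
  qed
  have "\<forall>x\<in>M. \<alpha> \<le> x"
  proof
    fix x assume "x \<in> M"
    then obtain S where S: "x = cut_cap V Es edge cap S" "S \<subseteq> V" "card (S \<inter> {v i, v j}) = 1"
      by (auto simp: M_def)
    have diff: "(v i \<in> S) \<noteq> (v j \<in> S)"
    proof
      assume eq: "(v i \<in> S) = (v j \<in> S)"
      show False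
      proof (cases "v i \<in> S")
        case True
        hence "S \<inter> {v i, v j} = {v i, v j}" using eq by auto
        thus False using S(3) vij by simp
      next
        case False
        hence "S \<inter> {v i, v j} = {}" using eq by auto
        thus False using S(3) by simp
      qed
    qed
    define p where "p = min i j"
    define q where "q = max i j"
    have pq1: "p \<le> q" unfolding p_def q_def by simp
    have pq2: "(v p \<in> S) \<noteq> (v q \<in> S)"
    proof (cases "i \<le> j")
      case True thus ?thesis using diff unfolding p_def q_def by (simp add: min_def max_def)
    next
      case False thus ?thesis using diff unfolding p_def q_def by (simp add: min_def max_def)
    qed
    note pq = pq1 pq2
    obtain k where k: "p \<le> k" "k < q" "(v k \<in> S) \<noteq> (v (Suc k) \<in> S)"
      using side_change[OF pq(1), of "\<lambda>k. v k \<in> S"] pq(2) by auto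
    have ak: "a \<le> k" "k < b" using k assms(5-8) unfolding p_def q_def by linarith+
    have "\<alpha> \<le> dcap Es edge cap [prefix_set v k, {v (Suc k)}]"
      using assms(4) ak by (simp add: tight_def)
    also have "\<dots> \<le> ccap Es edge cap v S (Suc k)"
      using active_bound[OF assms(1,2), of "Suc k" S] k ak rng by simp
    also have "\<dots> \<le> cut_cap V Es edge cap S"
      using ccap_le_cut[OF assms(1) S(2) assms(2)] ak rng by simp
    finally show "\<alpha> \<le> x" using S(1) by simp
  qed
  thus ?thesis using finM neM unfolding lam_def M_def[symmetric] by (simp add: Min_ge_iff)
qed

end
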